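(* Let $n\ge2$ and $H>1$. There is a constant $c(n,H)$, depending only on $n$ and $H$, with the following property. For every $\mu>0$, let $\varphi$ be the profile function of the hyperbolic Delaunay unduloid $\mathcal{D}_H(\mu)$ and let $V$ be the potential of its stability operator. Then $V\tan^2\varphi\le c(n,H)$ everywhere on $\mathcal{D}_H(\mu)$.
   Context: Use the upper half-space model of $\mathbb{H}^{n+1}$. For $\mu>0$ and $H>1$, let $\varphi:\mathbb{R}\to(0,\pi/2)$ be a solution of $$\mu=\frac{(\tan\varphi)^{n-1}}{\cos\varphi\sqrt{1+\varphi'^2}}-H(\tan\varphi)^n.$$ The hyperbolic Delaunay unduloid $\mathcal{D}_H(\mu)$ is parametrized by $\Phi(t,\omega)=(e^t\sin\varphi(t)\omega,e^t\cos\varphi(t))$, $\omega\in S^{n-1}$. It has constant (normalized) mean curvature $H$. Its stability operator is $L=\Delta-V$, where $\Delta$ is the non-negative Laplacian and $V=\|B\|^2-n$. Here $\|B\|$ is the norm of the second fundamental form, and $V\circ\Phi = n(H^2-1)+n(n-1)\mu^2(\tan\varphi)^{-2n}$. *)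

theory Defs
  imports "HOL-Analysis.Analysis"
begin

definition delaunay_profile :: "nat \<Rightarrow> real \<Rightarrow> real \<Rightarrow> (real \<Rightarrow> real) \<Rightarrow> bool" where
  "delaunay_profile n H \<mu> \<phi> \<longleftrightarrow>
     (\<forall>t. 0 < \<phi> t \<and> \<phi> t < pi / 2) \<and>
     (\<forall>t. \<phi> differentiable (at t)) \<and>
     (\<forall>t. \<mu> = tan (\<phi> t) ^ (n - 1) / (cos (\<phi> t) * sqrt (1 + (deriv \<phi> t)\<^sup>2))
              - H * tan (\<phi> t) ^ n)"

text \<open>Potential V = |B|^2 - n of the stability operator, pulled back by Phi (depends only on t):
  V(Phi(t,omega)) = n(H^2-1) + n(n-1) mu^2 (tan phi(t))^(-2n).\<close>
definition stab_potential :: "nat \<Rightarrow> real \<Rightarrow> real \<Rightarrow> (real \<Rightarrow> real) \<Rightarrow> real \<Rightarrow> real" where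
  "stab_potential n H \<mu> \<phi> t =
     real n * (H\<^sup>2 - 1) + real n * (real n - 1) * \<mu>\<^sup>2 / tan (\<phi> t) ^ (2 * n)"

end

theory Submission
  imports Defs
begin

lemma key:
  fixes n :: nat and H \<mu> x q s :: real
  assumes n: "n \<ge> 2" and H: "H > 1" and mu: "\<mu> > 0" and x: "x > 0" and q: "q > 0"
    and qq: "q^2 = 1 + x^2" and s: "s \<ge> 1"
    and eq: "\<mu> = x^(n-1) * q / s - H * x^n"
  shows "(real n * (H\<^sup>2 - 1) + real n * (real n - 1) * \<mu>\<^sup>2 / x ^ (2 * n)) * x^2
         \<le> real n + real n * (real n - 1) * (H^2 / (H^2 - 1))"
proof -
  define y where "y = x^(n-1)"
  have y: "y > 0" using x by (simp add: y_def)
  have xn: "x^n = x * y" using n unfolding y_def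
    by (metis Suc_diff_1 less_le_trans pos2 power_Suc zero_less_numeral)
  have x2n: "x^(2*n) = x^2 * y^2" using xn by (simp add: power_mult power2_eq_square mult.commute)
  have le: "y * q / s \<le> y * q" using y q s
  proof -
    have "0 < y * q" using y q by simp
    hence "y * q * 1 \<le> y * q * s" using s by (intro mult_left_mono) auto
    thus ?thesis using s by (simp add: divide_le_eq)
  qed
  have A: "\<mu> + H * x * y \<le> y * q" using eq le xn y_def by (simp add: mult.assoc)
  have "H * x * y < y * q" using A mu by linarith
  hence Hx: "H * x < q" using y by (simp add: mult.commute)
  have "(H*x)^2 < q^2" using Hx H x by (intro power_strict_mono) auto
  hence hx2: "(H^2 - 1) * x^2 < 1" using qq by (simp add: power_mult_distrib algebra_simps)
  have H21: "H^2 - 1 > 0" using H by (simp add: one_less_power)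
  have xb: "x^2 < 1 / (H^2 - 1)" using hx2 H21 by (simp add: field_simps)
  have "\<mu> < y * q" using A H x y by (smt (verit) mult_pos_pos)
  hence "\<mu>^2 < (y*q)^2" using mu by (intro power_strict_mono) auto
  hence "\<mu>^2 / y^2 < q^2" using y by (simp add: divide_less_eq power_mult_distrib mult.commute)
  moreover have "H^2 / (H^2 - 1) = 1 + 1 / (H^2 - 1)" using H21 by (simp add: field_simps)
  ultimately have mb: "\<mu>^2 / y^2 \<le> H^2 / (H^2 - 1)" using qq xb by linarith
  have "(real n * (H\<^sup>2 - 1) + real n * (real n - 1) * \<mu>\<^sup>2 / x ^ (2 * n)) * x^2
     = real n * ((H\<^sup>2 - 1) * x^2) + real n * (real n - 1) * (\<mu>^2 / y^2)"
    using x y unfolding x2n by (simp add: field_simps)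
  also have "\<dots> \<le> real n * 1 + real n * (real n - 1) * (H^2 / (H^2 - 1))"
    using hx2 mb n by (intro add_mono mult_left_mono) auto
  finally show ?thesis by simp
qed

theorem lemma3p4:
  fixes n :: nat and H :: real
  assumes "n \<ge> 2" and "H > 1"
  shows "\<exists>c::real. \<forall>\<mu>::real. \<forall>\<phi>::real \<Rightarrow> real.
           \<mu> > 0 \<longrightarrow> delaunay_profile n H \<mu> \<phi> \<longrightarrow>
           (\<forall>t. stab_potential n H \<mu> \<phi> t * (tan (\<phi> t))\<^sup>2 \<le> c)"
proof (intro exI allI impI)
  fix \<mu> :: real and \<phi> :: "real \<Rightarrow> real" and t :: real
  assume mu: "\<mu> > 0" and D: "delaunay_profile n H \<mu> \<phi>"
  define p where "p = \<phi> t"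
  have p: "0 < p" "p < pi/2" using D by (auto simp: delaunay_profile_def p_def)
  have c: "cos p > 0" using p by (intro cos_gt_zero) auto
  have x: "tan p > 0" using p by (intro tan_gt_zero) auto
  define s where "s = sqrt (1 + (deriv \<phi> t)\<^sup>2)"
  have s: "s \<ge> 1" unfolding s_def by simp
  have eq0: "\<mu> = tan p ^ (n - 1) / (cos p * s) - H * tan p ^ n"
    using D by (simp add: delaunay_profile_def p_def s_def)
  have eq: "\<mu> = tan p ^ (n-1) * (1 / cos p) / s - H * tan p ^ n"
    using eq0 by simp
  have qq: "(1 / cos p)^2 = 1 + (tan p)^2"
    using c by (simp add: tan_def field_simps sin_cos_squared_add3 power2_eq_square)
  show "stab_potential n H \<mu> \<phi> t * (tan (\<phi> t))\<^sup>2
        \<le> real n + real n * (real n - 1) * (H^2 / (H^2 - 1))"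
    unfolding stab_potential_def p_def[symmetric]
    using key[OF assms mu x _ qq s eq] c by simp
qed

end
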